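(* Let $\ell\ge 1$, $u=a^{\ell+1}$ and $v=a^{\ell}b$. For $\phi\in\mathbf{LTL}(\mathbf{F},\mathbf{X},\wedge)$ define $[\phi]\in\mathbf{LTL}(\mathbf{X},\wedge)$ inductively by $[c]=c$, $[\phi_1\wedge\phi_2]=[\phi_1]\wedge[\phi_2]$, $[\mathbf{X}\phi']=\mathbf{X}[\phi']$, $[\mathbf{F}\phi']=[\phi']$. Then for every $\phi\in\mathbf{LTL}(\mathbf{F},\mathbf{X},\wedge)$: (i) for every word $w$ and position $i$, $w,i\models[\phi]$ implies $w,i\models\phi$; (ii) for all $i\in[2,\ell+1]$ and $i'\in[1,i-1]$, $u,i\models\phi$ implies $v,i'\models\phi$; (iii) for all $i\in[1,\ell+1]$, if $u,i\models\phi$ and $v,i\not\models\phi$ then $u,i\models[\phi]$. Consequently, if $\phi$ separates $u$ from a family of words containing $v$, then $[\phi]$ (whose size is at most that of $\phi$) also separates $u$ from that family.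
   Context: Alphabet $\Sigma=\{a,b\}$; words nonempty, indexed from 1. Semantics on a word $w$ of length $\ell$ at position $i\in[1,\ell]$: $w,i\models c$ iff $w(i)=c$; $\wedge$ as usual; $w,i\models\mathbf{X}\phi$ iff $i<\ell$ and $w,i+1\models\phi$; $w,i\models\mathbf{F}\phi$ iff $w,i'\models\phi$ for some $i'\in[i,\ell]$; $w\models\phi$ iff $w,1\models\phi$. Size = number of syntax tree nodes. $\phi$ separates $u$ from a family of words if $u\models\phi$ and no word of the family satisfies $\phi$. *)

theory Defs
  imports Main
begin

datatype letter = LA | LB

datatype ltl = Atom letter | And ltl ltl | Next ltl | Fin ltl

text \<open>Words are lists; positions are 1-indexed, position i refers to w ! (i - 1).\<close>
fun sat :: "letter list \<Rightarrow> nat \<Rightarrow> ltl \<Rightarrow> bool" where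
  "sat w i (Atom c) = (w ! (i - 1) = c)"
| "sat w i (And p q) = (sat w i p \<and> sat w i q)"
| "sat w i (Next p) = (i < length w \<and> sat w (Suc i) p)"
| "sat w i (Fin p) = (\<exists>i'. i \<le> i' \<and> i' \<le> length w \<and> sat w i' p)"

definition models :: "letter list \<Rightarrow> ltl \<Rightarrow> bool" where
  "models w p = sat w 1 p"

fun fsize :: "ltl \<Rightarrow> nat" where
  "fsize (Atom c) = 1"
| "fsize (And p q) = fsize p + fsize q + 1"
| "fsize (Next p) = fsize p + 1"
| "fsize (Fin p) = fsize p + 1"

fun noF :: "ltl \<Rightarrow> bool" where
  "noF (Atom c) = True"
| "noF (And p q) = (noF p \<and> noF q)"
| "noF (Next p) = noF p"
| "noF (Fin p) = False"

fun strip :: "ltl \<Rightarrow> ltl" where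
  "strip (Atom c) = Atom c"
| "strip (And p q) = And (strip p) (strip q)"
| "strip (Next p) = Next (strip p)"
| "strip (Fin p) = strip p"

definition separates :: "ltl \<Rightarrow> letter list \<Rightarrow> letter list set \<Rightarrow> bool" where
  "separates p u W = (models u p \<and> (\<forall>w\<in>W. \<not> models w p))"

end

theory Submission
  imports Defs
begin

lemma noF_strip: "noF (strip p)" by (induction p) auto
lemma fsize_strip: "fsize (strip p) \<le> fsize p" by (induction p) auto

lemma strip_sound: "1 \<le> i \<Longrightarrow> i \<le> length w \<Longrightarrow> sat w i (strip p) \<Longrightarrow> sat w i p"
proof (induction p arbitrary: i)
  case (Next p) thus ?case by auto
next
  case (Fin p) thus ?case by auto
qed auto

lemma allA: "1 \<le> j \<Longrightarrow> j \<le> i \<Longrightarrow> i \<le> n \<Longrightarrow> sat (replicate n LA) i p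
   \<Longrightarrow> sat (replicate n LA) j (strip p)"
proof (induction p arbitrary: i j)
  case (Atom c) thus ?case by auto
next
  case (And p q) thus ?case by auto
next
  case (Next p)
  thus ?case by (auto intro!: Next.IH[of "Suc j" "Suc i"])
next
  case (Fin p)
  then obtain i' where "i \<le> i'" "i' \<le> n" "sat (replicate n LA) i' p" by auto
  thus ?case using Fin.IH[of j i'] Fin.prems by auto
qed

lemma uv: "u = replicate (l + 1) LA \<Longrightarrow> v = replicate l LA @ [LB] \<Longrightarrow>
  2 \<le> i \<Longrightarrow> i \<le> l + 1 \<Longrightarrow> 1 \<le> i' \<Longrightarrow> i' \<le> i - 1 \<Longrightarrow> sat u i p \<Longrightarrow> sat v i' p"
proof (induction p arbitrary: i i')
  case (Atom c)
  hence "c = LA" by auto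
  moreover have "v ! (i' - 1) = LA" using Atom.prems by (auto simp: nth_append)
  ultimately show ?case by simp
next
  case (And p q) thus ?case by auto
next
  case (Next p)
  hence "sat v (Suc i') p" using Next.IH[of "Suc i" "Suc i'"] by auto
  thus ?case using Next.prems by auto
next
  case (Fin p)
  then obtain j where j: "i \<le> j" "j \<le> l + 1" "sat u j p" by auto
  hence "sat v (j - 1) p" using Fin.IH[of j "j - 1"] Fin.prems by auto
  thus ?case using j Fin.prems by (auto intro!: exI[of _ "j - 1"])
qed

theorem mainTheorem15:
  fixes l :: nat and u v :: "letter list"
  assumes "l \<ge> 1"
    and "u = replicate (l + 1) LA"
    and "v = replicate l LA @ [LB]"
  shows "\<forall>\<phi>.
      noF (strip \<phi>) \<and> fsize (strip \<phi>) \<le> fsize \<phi>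
    \<and> (\<forall>w i. w \<noteq> [] \<and> 1 \<le> i \<and> i \<le> length w \<longrightarrow> sat w i (strip \<phi>) \<longrightarrow> sat w i \<phi>)
    \<and> (\<forall>i i'. 2 \<le> i \<and> i \<le> l + 1 \<and> 1 \<le> i' \<and> i' \<le> i - 1 \<longrightarrow> sat u i \<phi> \<longrightarrow> sat v i' \<phi>)
    \<and> (\<forall>i. 1 \<le> i \<and> i \<le> l + 1 \<longrightarrow> sat u i \<phi> \<and> \<not> sat v i \<phi> \<longrightarrow> sat u i (strip \<phi>))
    \<and> (\<forall>W. (\<forall>w\<in>W. w \<noteq> []) \<and> v \<in> W \<and> separates \<phi> u W \<longrightarrow> separates (strip \<phi>) u W)"
proof (rule allI, intro conjI)
  fix p
  show "noF (strip p)" by (rule noF_strip)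
  show "fsize (strip p) \<le> fsize p" by (rule fsize_strip)
  show "\<forall>w i. w \<noteq> [] \<and> 1 \<le> i \<and> i \<le> length w \<longrightarrow> sat w i (strip p) \<longrightarrow> sat w i p"
  proof (intro allI impI)
    fix w i assume "w \<noteq> [] \<and> 1 \<le> i \<and> i \<le> length w" "sat w i (strip p)"
    thus "sat w i p" using strip_sound by blast
  qed
  show "\<forall>i i'. 2 \<le> i \<and> i \<le> l + 1 \<and> 1 \<le> i' \<and> i' \<le> i - 1 \<longrightarrow> sat u i p \<longrightarrow> sat v i' p"
  proof (intro allI impI)
    fix i i' assume "2 \<le> i \<and> i \<le> l + 1 \<and> 1 \<le> i' \<and> i' \<le> i - 1" "sat u i p"
    thus "sat v i' p" using uv[OF assms(2,3)] by blast
  qed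
  show "\<forall>i. 1 \<le> i \<and> i \<le> l + 1 \<longrightarrow> sat u i p \<and> \<not> sat v i p \<longrightarrow> sat u i (strip p)"
    using allA[of _ _ "l+1" p] assms(2) by blast
  show "\<forall>W. (\<forall>w\<in>W. w \<noteq> []) \<and> v \<in> W \<and> separates p u W \<longrightarrow> separates (strip p) u W"
  proof (intro allI impI)
    fix W assume h: "(\<forall>w\<in>W. w \<noteq> []) \<and> v \<in> W \<and> separates p u W"
    have "models u (strip p)" using h allA[of 1 1 "l+1" p] assms(2)
      by (auto simp: separates_def models_def)
    moreover have "\<forall>w\<in>W. \<not> models w (strip p)"
    proof
      fix w assume "w \<in> W"
      hence "w \<noteq> []" "\<not> models w p" using h by (auto simp: separates_def)
      thus "\<not> models w (strip p)" using strip_sound[of 1 w p]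
        by (auto simp: models_def Suc_le_eq)
    qed
    ultimately show "separates (strip p) u W" by (simp add: separates_def)
  qed
qed

end
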